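(* Let $(R,\mathfrak m)$ be a noetherian local ring and $\nu$ a valuation centered on $R$. Then there exists a local blowing up $R\to R^{(1)}$ with respect to $\nu$ such that $\mathrm{Nil}(R^{(1)})$ is the only associated prime ideal of $R^{(1)}$.
   Context: All rings are commutative noetherian with $1$; $\mathrm{Nil}(A)$ denotes the nilradical of $A$. A valuation on a ring $R$ is a map $\nu:R\to\Gamma\cup\{\infty\}$ ($\Gamma$ an ordered abelian group) with $\nu(ab)=\nu(a)+\nu(b)$, $\nu(a+b)\ge\min\{\nu(a),\nu(b)\}$, $\nu(1)=0$, $\nu(0)=\infty$, whose support $\mathrm{supp}(\nu)=\{a:\nu(a)=\infty\}$ is a minimal prime ideal; it extends to localizations at multiplicative sets disjoint from the support via $\nu(a/s)=\nu(a)-\nu(s)$ and restricts to subrings, implicitly. $\nu$ has a center on $R$ if $\nu\ge0$ on $R$; its center is $\mathfrak C_\nu(R)=\{a:\nu(a)>0\}$. $\nu$ is centered on $(R,\mathfrak m)$ if $\nu\ge0$ on $R$ and $\nu>0$ on $\mathfrak m$. Local blowing up: for $b\in R\setminus\mathrm{supp}(\nu)$ let $J(b)=\bigcup_{i\ge1}\mathrm{ann}_R(b^i)$, so $R/J(b)\subseteq R_b$. Given $a_1,\ldots,a_r\in R$ with $\nu(a_i)\ge\nu(b)$, let $R'=(R/J(b))[a_1/b,\ldots,a_r/b]\subseteq R_b$ and $R^{(1)}=R'_{\mathfrak C_\nu(R')}$; the canonical map $R\to R^{(1)}$ is the local blowing up of $R$ with respect to $\nu$ along $(b,a_1,\ldots,a_r)$.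 *)

theory Defs
  imports "HOL-Algebra.Algebra"
begin

text \<open>Values in \<open>\<Gamma> \<union> {\<infinity>}\<close> are encoded as \<open>'g option\<close>, with \<open>None\<close> playing the role of \<open>\<infinity>\<close>.\<close>

fun vle :: "'g::linordered_ab_group_add option \<Rightarrow> 'g option \<Rightarrow> bool" where
  "vle _ None = True"
| "vle None (Some _) = False"
| "vle (Some a) (Some b) = (a \<le> b)"

definition vlt :: "'g::linordered_ab_group_add option \<Rightarrow> 'g option \<Rightarrow> bool" where
  "vlt x y = (vle x y \<and> x \<noteq> y)"

fun vplus :: "'g::linordered_ab_group_add option \<Rightarrow> 'g option \<Rightarrow> 'g option" where
  "vplus (Some a) (Some b) = Some (a + b)"
| "vplus _ _ = None"

text \<open>\<open>\<nu>(a) - \<nu>(s)\<close>, used only for \<open>\<nu>(s) \<noteq> \<infinity>\<close>.\<close>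
fun vminus :: "'g::linordered_ab_group_add option \<Rightarrow> 'g option \<Rightarrow> 'g option" where
  "vminus (Some a) (Some b) = Some (a - b)"
| "vminus None _ = None"
| "vminus (Some a) None = None"

definition minimal_prime :: "'a set \<Rightarrow> ('a, 'b) ring_scheme \<Rightarrow> bool" where
  "minimal_prime P R \<longleftrightarrow> primeideal P R \<and> (\<forall>Q. primeideal Q R \<and> Q \<subseteq> P \<longrightarrow> Q = P)"

definition vsupp :: "('a, 'b) ring_scheme \<Rightarrow> ('a \<Rightarrow> 'g option) \<Rightarrow> 'a set" where
  "vsupp R \<nu> = {a \<in> carrier R. \<nu> a = None}"

definition valuation :: "('a, 'b) ring_scheme \<Rightarrow> ('a \<Rightarrow> 'g::linordered_ab_group_add option) \<Rightarrow> bool" where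
  "valuation R \<nu> \<longleftrightarrow> cring R
     \<and> (\<forall>a\<in>carrier R. \<forall>b\<in>carrier R. \<nu> (a \<otimes>\<^bsub>R\<^esub> b) = vplus (\<nu> a) (\<nu> b))
     \<and> (\<forall>a\<in>carrier R. \<forall>b\<in>carrier R. vle (\<nu> a) (\<nu> (a \<oplus>\<^bsub>R\<^esub> b)) \<or> vle (\<nu> b) (\<nu> (a \<oplus>\<^bsub>R\<^esub> b)))
     \<and> \<nu> \<one>\<^bsub>R\<^esub> = Some 0 \<and> \<nu> \<zero>\<^bsub>R\<^esub> = None
     \<and> minimal_prime (vsupp R \<nu>) R"

definition has_center :: "('a, 'b) ring_scheme \<Rightarrow> ('a \<Rightarrow> 'g::linordered_ab_group_add option) \<Rightarrow> bool" where
  "has_center R \<nu> \<longleftrightarrow> (\<forall>a\<in>carrier R. vle (Some 0) (\<nu> a))"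

definition vcenter :: "('a, 'b) ring_scheme \<Rightarrow> ('a \<Rightarrow> 'g::linordered_ab_group_add option) \<Rightarrow> 'a set" where
  "vcenter R \<nu> = {a \<in> carrier R. vlt (Some 0) (\<nu> a)}"

definition centered_on :: "('a, 'b) ring_scheme \<Rightarrow> 'a set \<Rightarrow> ('a \<Rightarrow> 'g::linordered_ab_group_add option) \<Rightarrow> bool" where
  "centered_on R m \<nu> \<longleftrightarrow> has_center R \<nu> \<and> (\<forall>a\<in>m. vlt (Some 0) (\<nu> a))"

definition local_ring :: "('a, 'b) ring_scheme \<Rightarrow> 'a set \<Rightarrow> bool" where
  "local_ring R m \<longleftrightarrow> cring R \<and> maximalideal m R \<and> (\<forall>I. maximalideal I R \<longrightarrow> I = m)"

definition nilradical :: "('a, 'b) ring_scheme \<Rightarrow> 'a set" where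
  "nilradical R = {x \<in> carrier R. \<exists>n::nat. x [^]\<^bsub>R\<^esub> n = \<zero>\<^bsub>R\<^esub>}"

definition ann_elem :: "('a, 'b) ring_scheme \<Rightarrow> 'a \<Rightarrow> 'a set" where
  "ann_elem R x = {y \<in> carrier R. y \<otimes>\<^bsub>R\<^esub> x = \<zero>\<^bsub>R\<^esub>}"

definition associated_primes :: "('a, 'b) ring_scheme \<Rightarrow> 'a set set" where
  "associated_primes R = {P. primeideal P R \<and> (\<exists>x\<in>carrier R. P = ann_elem R x)}"

definition loc_class :: "('a, 'b) ring_scheme \<Rightarrow> 'a set \<Rightarrow> 'a \<times> 'a \<Rightarrow> ('a \<times> 'a) set" where
  "loc_class R S p = {(b, t). b \<in> carrier R \<and> t \<in> S \<and>
      (\<exists>u\<in>S. u \<otimes>\<^bsub>R\<^esub> ((t \<otimes>\<^bsub>R\<^esub> fst p) \<ominus>\<^bsub>R\<^esub> (snd p \<otimes>\<^bsub>R\<^esub> b)) = \<zero>\<^bsub>R\<^esub>)}"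

definition localization :: "('a, 'b) ring_scheme \<Rightarrow> 'a set \<Rightarrow> ('a \<times> 'a) set ring" where
  "localization R S =
    \<lparr> carrier = {loc_class R S (a, s) | a s. a \<in> carrier R \<and> s \<in> S},
      monoid.mult = (\<lambda>x y. \<Union>{loc_class R S (a \<otimes>\<^bsub>R\<^esub> b, s \<otimes>\<^bsub>R\<^esub> t) | a s b t. (a, s) \<in> x \<and> (b, t) \<in> y}),
      one = loc_class R S (\<one>\<^bsub>R\<^esub>, \<one>\<^bsub>R\<^esub>),
      ring.zero = loc_class R S (\<zero>\<^bsub>R\<^esub>, \<one>\<^bsub>R\<^esub>),
      ring.add = (\<lambda>x y. \<Union>{loc_class R S ((t \<otimes>\<^bsub>R\<^esub> a) \<oplus>\<^bsub>R\<^esub> (s \<otimes>\<^bsub>R\<^esub> b), s \<otimes>\<^bsub>R\<^esub> t) | a s b t. (a, s) \<in> x \<and> (b, t) \<in> y}) \<rparr>"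

definition loc_val :: "('a \<Rightarrow> 'g::linordered_ab_group_add option) \<Rightarrow> ('a \<times> 'a) set \<Rightarrow> 'g option" where
  "loc_val \<nu> x = (SOME v. \<exists>(a, s)\<in>x. v = vminus (\<nu> a) (\<nu> s))"

definition powers :: "('a, 'b) ring_scheme \<Rightarrow> 'a \<Rightarrow> 'a set" where
  "powers R b = {b [^]\<^bsub>R\<^esub> (n::nat) | n. True}"

text \<open>\<open>R_b\<close>; the image of \<open>R\<close> in it is \<open>R/J(b)\<close>.\<close>
definition Rb :: "('a, 'b) ring_scheme \<Rightarrow> 'a \<Rightarrow> ('a \<times> 'a) set ring" where
  "Rb R b = localization R (powers R b)"

text \<open>\<open>R' = (R/J(b))[a_1/b, \<dots>, a_r/b] \<subseteq> R_b\<close>.\<close>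
definition blowup_chart :: "('a, 'b) ring_scheme \<Rightarrow> 'a \<Rightarrow> 'a list \<Rightarrow> ('a \<times> 'a) set ring" where
  "blowup_chart R b as =
     (Rb R b) \<lparr> carrier := generate_ring (Rb R b)
        ({loc_class R (powers R b) (r, \<one>\<^bsub>R\<^esub>) | r. r \<in> carrier R}
         \<union> {loc_class R (powers R b) (a, b) | a. a \<in> set as}) \<rparr>"

text \<open>\<open>R^{(1)} = R'_{\<CC>_\<nu>(R')}\<close>.\<close>
definition local_blowup :: "('a, 'b) ring_scheme \<Rightarrow> ('a \<Rightarrow> 'g::linordered_ab_group_add option) \<Rightarrow> 'a \<Rightarrow> 'a list
     \<Rightarrow> (('a \<times> 'a) set \<times> ('a \<times> 'a) set) set ring" where
  "local_blowup R \<nu> b as =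
     (let R' = blowup_chart R b as
      in localization R' (carrier R' - vcenter R' (loc_val \<nu>)))"

definition blowup_data :: "('a, 'b) ring_scheme \<Rightarrow> ('a \<Rightarrow> 'g::linordered_ab_group_add option) \<Rightarrow> 'a \<Rightarrow> 'a list \<Rightarrow> bool" where
  "blowup_data R \<nu> b as \<longleftrightarrow> b \<in> carrier R \<and> b \<notin> vsupp R \<nu>
     \<and> (\<forall>a\<in>set as. a \<in> carrier R \<and> vle (\<nu> b) (\<nu> a))"

end

theory Submission
  imports Defs
begin


locale mloc = cring R for R (structure) +
  fixes S
  assumes S_sub: "S \<subseteq> carrier R" and one_S: "\<one> \<in> S"
    and S_mult: "\<lbrakk>s \<in> S; t \<in> S\<rbrakk> \<Longrightarrow> s \<otimes> t \<in> S"
begin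

abbreviation "cls a s \<equiv> loc_class R S (a, s)"
abbreviation "L \<equiv> localization R S"

lemma S_c: "s \<in> S \<Longrightarrow> s \<in> carrier R" using S_sub by auto

lemma diff_zero_iff:
  "\<lbrakk>u\<in>carrier R; x\<in>carrier R; y\<in>carrier R\<rbrakk> \<Longrightarrow> (u \<otimes> (x \<ominus> y) = \<zero>) = (u \<otimes> x = u \<otimes> y)"
proof -
  assume a: "u\<in>carrier R" "x\<in>carrier R" "y\<in>carrier R"
  have "u \<otimes> (x \<ominus> y) = u \<otimes> x \<ominus> u \<otimes> y" using a by algebra
  thus ?thesis using a by simp
qed

lemma mem_cls:
  "(b, t) \<in> cls a s \<longleftrightarrow> b \<in> carrier R \<and> t \<in> S \<and> (\<exists>u\<in>S. u \<otimes> (t \<otimes> a) = u \<otimes> (s \<otimes> b))"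
  if "a \<in> carrier R" "s \<in> S"
  using that unfolding loc_class_def
  by (auto simp: diff_zero_iff S_c)

lemma cls_refl: "a \<in> carrier R \<Longrightarrow> s \<in> S \<Longrightarrow> (a, s) \<in> cls a s"
  by (subst mem_cls) (auto simp: S_c m_comm intro: one_S)

lemma cls_sym: assumes "a \<in> carrier R" "s \<in> S" "(b, t) \<in> cls a s"
  shows "(a, s) \<in> cls b t"
  using assms by (auto simp: mem_cls) (metis)

lemma cls_trans: assumes a: "a \<in> carrier R" "s \<in> S" and bt: "(b, t) \<in> cls a s" and cr: "(c, r) \<in> cls b t"
  shows "(c, r) \<in> cls a s"
proof -
  from bt a obtain u where b: "b \<in> carrier R" "t \<in> S" "u \<in> S" and e1: "u \<otimes> (t \<otimes> a) = u \<otimes> (s \<otimes> b)"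
    by (auto simp: mem_cls)
  from cr b obtain v where c: "c \<in> carrier R" "r \<in> S" "v \<in> S" and e2: "v \<otimes> (r \<otimes> b) = v \<otimes> (t \<otimes> c)"
    by (auto simp: mem_cls)
  have C: "u \<in> carrier R" "v \<in> carrier R" "t \<in> carrier R" "r \<in> carrier R" "s \<in> carrier R"
    using a b c by (auto simp: S_c)
  have "(u \<otimes> v \<otimes> t) \<otimes> (r \<otimes> a) = (v \<otimes> r) \<otimes> (u \<otimes> (t \<otimes> a))" using C a by algebra
  also have "\<dots> = (v \<otimes> r) \<otimes> (u \<otimes> (s \<otimes> b))" using e1 by simp
  also have "\<dots> = (u \<otimes> s) \<otimes> (v \<otimes> (r \<otimes> b))" using C b by algebra
  also have "\<dots> = (u \<otimes> s) \<otimes> (v \<otimes> (t \<otimes> c))" using e2 by simp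
  also have "\<dots> = (u \<otimes> v \<otimes> t) \<otimes> (s \<otimes> c)" using C c by algebra
  finally show ?thesis using a b c by (subst mem_cls) (auto intro!: bexI[of _ "u \<otimes> v \<otimes> t"] S_mult)
qed

lemma cls_eqI: assumes "a \<in> carrier R" "s \<in> S" "(b, t) \<in> cls a s"
  shows "cls b t = cls a s"
proof -
  have bt: "b \<in> carrier R" "t \<in> S" using assms by (auto simp: mem_cls)
  show ?thesis
  proof (rule subset_antisym; rule subsetI)
    fix p assume "p \<in> cls b t"
    then show "p \<in> cls a s" using cls_trans[OF assms] by (cases p) auto
  next
    fix p assume "p \<in> cls a s"
    then show "p \<in> cls b t" using cls_trans[OF bt cls_sym[OF assms]] by (cases p) auto
  qed
qed

lemma cls_eq_iff: assumes "a \<in> carrier R" "s \<in> S" "b \<in> carrier R" "t \<in> S"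
  shows "cls b t = cls a s \<longleftrightarrow> (\<exists>u\<in>S. u \<otimes> (t \<otimes> a) = u \<otimes> (s \<otimes> b))"
  using assms cls_eqI[OF assms(1,2)] cls_refl[OF assms(3,4)]
  by (metis mem_cls)


lemma cls_cong: "e1 = e2 \<Longrightarrow> f1 = f2 \<Longrightarrow> cls e1 f1 = cls e2 f2" by simp

lemma cls_scale: assumes "a \<in> carrier R" "s \<in> S" "r \<in> S"
  shows "cls (r \<otimes> a) (r \<otimes> s) = cls a s"
proof -
  have C: "r \<in> carrier R" "s \<in> carrier R" using assms S_c by auto
  show ?thesis using assms C
    by (subst cls_eq_iff) (auto intro!: bexI[of _ "\<one>"] one_S S_mult simp: m_lcomm m_assoc)
qed

lemma mult_compat:
  assumes a: "a \<in> carrier R" "s \<in> S" "b \<in> carrier R" "t \<in> S"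
    and p: "(a', s') \<in> cls a s" and q: "(b', t') \<in> cls b t"
  shows "(a' \<otimes> b', s' \<otimes> t') \<in> cls (a \<otimes> b) (s \<otimes> t)"
proof -
  from p a obtain u where p': "a' \<in> carrier R" "s' \<in> S" "u \<in> S" and e1: "u \<otimes> (s' \<otimes> a) = u \<otimes> (s \<otimes> a')"
    by (auto simp: mem_cls)
  from q a obtain v where q': "b' \<in> carrier R" "t' \<in> S" "v \<in> S" and e2: "v \<otimes> (t' \<otimes> b) = v \<otimes> (t \<otimes> b')"
    by (auto simp: mem_cls)
  have C: "u \<in> carrier R" "v \<in> carrier R" "t \<in> carrier R" "s \<in> carrier R" "t' \<in> carrier R" "s' \<in> carrier R"
    using a p' q' by (auto simp: S_c)
  have "(u \<otimes> v) \<otimes> ((s' \<otimes> t') \<otimes> (a \<otimes> b)) = (u \<otimes> (s' \<otimes> a)) \<otimes> (v \<otimes> (t' \<otimes> b))"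
    using C a p' q' by algebra
  also have "\<dots> = (u \<otimes> (s \<otimes> a')) \<otimes> (v \<otimes> (t \<otimes> b'))" using e1 e2 by simp
  also have "\<dots> = (u \<otimes> v) \<otimes> ((s \<otimes> t) \<otimes> (a' \<otimes> b'))" using C a p' q' by algebra
  finally show ?thesis using a p' q' C
    by (subst mem_cls) (auto intro!: bexI[of _ "u \<otimes> v"] S_mult)
qed

lemma add_compat:
  assumes a: "a \<in> carrier R" "s \<in> S" "b \<in> carrier R" "t \<in> S"
    and p: "(a', s') \<in> cls a s" and q: "(b', t') \<in> cls b t"
  shows "(t' \<otimes> a' \<oplus> s' \<otimes> b', s' \<otimes> t') \<in> cls (t \<otimes> a \<oplus> s \<otimes> b) (s \<otimes> t)"
proof -
  from p a obtain u where p': "a' \<in> carrier R" "s' \<in> S" "u \<in> S" and e1: "u \<otimes> (s' \<otimes> a) = u \<otimes> (s \<otimes> a')"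
    by (auto simp: mem_cls)
  from q a obtain v where q': "b' \<in> carrier R" "t' \<in> S" "v \<in> S" and e2: "v \<otimes> (t' \<otimes> b) = v \<otimes> (t \<otimes> b')"
    by (auto simp: mem_cls)
  have C: "u \<in> carrier R" "v \<in> carrier R" "t \<in> carrier R" "s \<in> carrier R" "t' \<in> carrier R" "s' \<in> carrier R"
    using a p' q' by (auto simp: S_c)
  have "(u \<otimes> v) \<otimes> ((s' \<otimes> t') \<otimes> (t \<otimes> a \<oplus> s \<otimes> b))
      = (v \<otimes> t \<otimes> t') \<otimes> (u \<otimes> (s' \<otimes> a)) \<oplus> (u \<otimes> s \<otimes> s') \<otimes> (v \<otimes> (t' \<otimes> b))"
    using C a p' q' by algebra
  also have "\<dots> = (v \<otimes> t \<otimes> t') \<otimes> (u \<otimes> (s \<otimes> a')) \<oplus> (u \<otimes> s \<otimes> s') \<otimes> (v \<otimes> (t \<otimes> b'))" using e1 e2 by simp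
  also have "\<dots> = (u \<otimes> v) \<otimes> ((s \<otimes> t) \<otimes> (t' \<otimes> a' \<oplus> s' \<otimes> b'))" using C a p' q' by algebra
  finally show ?thesis using a p' q' C
    by (subst mem_cls) (auto intro!: bexI[of _ "u \<otimes> v"] S_mult)
qed

lemma carrier_L: "carrier L = {cls a s | a s. a \<in> carrier R \<and> s \<in> S}"
  by (simp add: localization_def)

lemma carrier_LE: assumes "x \<in> carrier L"
  obtains a s where "x = cls a s" "a \<in> carrier R" "s \<in> S"
  using assms by (auto simp: carrier_L)

lemma cls_in_L: "a \<in> carrier R \<Longrightarrow> s \<in> S \<Longrightarrow> cls a s \<in> carrier L"
  by (auto simp: carrier_L)

lemma zero_L: "\<zero>\<^bsub>L\<^esub> = cls \<zero> \<one>" by (simp add: localization_def)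
lemma one_L: "\<one>\<^bsub>L\<^esub> = cls \<one> \<one>" by (simp add: localization_def)

lemma mult_cls: assumes a: "a \<in> carrier R" "s \<in> S" "b \<in> carrier R" "t \<in> S"
  shows "cls a s \<otimes>\<^bsub>L\<^esub> cls b t = cls (a \<otimes> b) (s \<otimes> t)"
proof -
  have ab: "a \<otimes> b \<in> carrier R" "s \<otimes> t \<in> S" using a by (auto intro: S_mult)
  have "{cls (a' \<otimes> b') (s' \<otimes> t') | a' s' b' t'. (a', s') \<in> cls a s \<and> (b', t') \<in> cls b t}
        = {cls (a \<otimes> b) (s \<otimes> t)}"
  proof (rule subset_antisym)
    show "{cls (a' \<otimes> b') (s' \<otimes> t') | a' s' b' t'. (a', s') \<in> cls a s \<and> (b', t') \<in> cls b t}
        \<subseteq> {cls (a \<otimes> b) (s \<otimes> t)}"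
      using cls_eqI[OF ab mult_compat[OF a]] by blast
    show "{cls (a \<otimes> b) (s \<otimes> t)} \<subseteq> {cls (a' \<otimes> b') (s' \<otimes> t') | a' s' b' t'. (a', s') \<in> cls a s \<and> (b', t') \<in> cls b t}"
      using cls_refl a by blast
  qed
  thus ?thesis by (simp add: localization_def)
qed

lemma add_cls: assumes a: "a \<in> carrier R" "s \<in> S" "b \<in> carrier R" "t \<in> S"
  shows "cls a s \<oplus>\<^bsub>L\<^esub> cls b t = cls (t \<otimes> a \<oplus> s \<otimes> b) (s \<otimes> t)"
proof -
  have ab: "t \<otimes> a \<oplus> s \<otimes> b \<in> carrier R" "s \<otimes> t \<in> S" using a S_c by (auto intro: S_mult)
  have "{cls (t' \<otimes> a' \<oplus> s' \<otimes> b') (s' \<otimes> t') | a' s' b' t'. (a', s') \<in> cls a s \<and> (b', t') \<in> cls b t}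
        = {cls (t \<otimes> a \<oplus> s \<otimes> b) (s \<otimes> t)}"
  proof (rule subset_antisym)
    show "{cls (t' \<otimes> a' \<oplus> s' \<otimes> b') (s' \<otimes> t') | a' s' b' t'. (a', s') \<in> cls a s \<and> (b', t') \<in> cls b t}
        \<subseteq> {cls (t \<otimes> a \<oplus> s \<otimes> b) (s \<otimes> t)}"
      using cls_eqI[OF ab add_compat[OF a]] by blast
    show "{cls (t \<otimes> a \<oplus> s \<otimes> b) (s \<otimes> t)} \<subseteq> {cls (t' \<otimes> a' \<oplus> s' \<otimes> b') (s' \<otimes> t') | a' s' b' t'. (a', s') \<in> cls a s \<and> (b', t') \<in> cls b t}"
      using cls_refl a by blast
  qed
  thus ?thesis by (simp add: localization_def)
qed


lemma cls_zero: "t \<in> S \<Longrightarrow> cls \<zero> t = cls \<zero> \<one>"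
  using S_c by (subst cls_eq_iff) (auto intro!: bexI[of _ "\<one>"] one_S)

lemma L_cring: "cring L"
proof (rule cringI)
  show "abelian_group L"
  proof (rule abelian_groupI)
    fix x y assume "x \<in> carrier L" "y \<in> carrier L"
    then show "x \<oplus>\<^bsub>L\<^esub> y \<in> carrier L"
      by (elim carrier_LE) (simp add: add_cls S_c S_mult cls_in_L)
  next
    show "\<zero>\<^bsub>L\<^esub> \<in> carrier L" by (simp add: zero_L cls_in_L one_S)
  next
    fix x y z assume "x \<in> carrier L" "y \<in> carrier L" "z \<in> carrier L"
    then show "x \<oplus>\<^bsub>L\<^esub> y \<oplus>\<^bsub>L\<^esub> z = x \<oplus>\<^bsub>L\<^esub> (y \<oplus>\<^bsub>L\<^esub> z)"
    proof (elim carrier_LE)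
      fix a s b t c r assume A: "x = cls a s" "a \<in> carrier R" "s \<in> S" "y = cls b t" "b \<in> carrier R" "t \<in> S"
        "z = cls c r" "c \<in> carrier R" "r \<in> S"
      have C: "s \<in> carrier R" "t \<in> carrier R" "r \<in> carrier R" using A S_c by auto
      show ?thesis using A C
        by (simp add: add_cls S_mult) (rule cls_cong; algebra)
    qed
  next
    fix x y assume "x \<in> carrier L" "y \<in> carrier L"
    then show "x \<oplus>\<^bsub>L\<^esub> y = y \<oplus>\<^bsub>L\<^esub> x"
    proof (elim carrier_LE)
      fix a s b t assume A: "x = cls a s" "a \<in> carrier R" "s \<in> S" "y = cls b t" "b \<in> carrier R" "t \<in> S"
      have C: "s \<in> carrier R" "t \<in> carrier R" using A S_c by auto
      show ?thesis using A C
        by (simp add: add_cls S_mult) (rule cls_cong; algebra)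
    qed
  next
    fix x assume "x \<in> carrier L"
    then show "\<zero>\<^bsub>L\<^esub> \<oplus>\<^bsub>L\<^esub> x = x"
      by (elim carrier_LE) (simp add: zero_L add_cls one_S S_c)
  next
    fix x assume "x \<in> carrier L"
    then show "\<exists>y\<in>carrier L. y \<oplus>\<^bsub>L\<^esub> x = \<zero>\<^bsub>L\<^esub>"
    proof (elim carrier_LE)
      fix a s assume A: "x = cls a s" "a \<in> carrier R" "s \<in> S"
      have C: "s \<in> carrier R" using A S_c by auto
      have "cls (\<ominus> a) s \<oplus>\<^bsub>L\<^esub> x = cls \<zero> (s \<otimes> s)"
        using A C by (simp add: add_cls) (rule cls_cong; algebra)
      also have "\<dots> = \<zero>\<^bsub>L\<^esub>" using A by (simp add: zero_L cls_zero S_mult)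
      finally show ?thesis using A cls_in_L by (intro bexI[of _ "cls (\<ominus> a) s"]) auto
    qed
  qed
next
  show "comm_monoid L"
  proof (rule comm_monoidI)
    fix x y assume "x \<in> carrier L" "y \<in> carrier L"
    then show "x \<otimes>\<^bsub>L\<^esub> y \<in> carrier L"
      by (elim carrier_LE) (simp add: mult_cls S_mult cls_in_L)
  next
    show "\<one>\<^bsub>L\<^esub> \<in> carrier L" by (simp add: one_L cls_in_L one_S)
  next
    fix x y z assume "x \<in> carrier L" "y \<in> carrier L" "z \<in> carrier L"
    then show "x \<otimes>\<^bsub>L\<^esub> y \<otimes>\<^bsub>L\<^esub> z = x \<otimes>\<^bsub>L\<^esub> (y \<otimes>\<^bsub>L\<^esub> z)"
      by (elim carrier_LE) (simp add: mult_cls S_mult S_c m_assoc)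
  next
    fix x assume "x \<in> carrier L"
    then show "\<one>\<^bsub>L\<^esub> \<otimes>\<^bsub>L\<^esub> x = x"
      by (elim carrier_LE) (simp add: one_L mult_cls one_S S_c)
  next
    fix x y assume "x \<in> carrier L" "y \<in> carrier L"
    then show "x \<otimes>\<^bsub>L\<^esub> y = y \<otimes>\<^bsub>L\<^esub> x"
      by (elim carrier_LE) (simp add: mult_cls S_c m_comm)
  qed
next
  fix x y z assume "x \<in> carrier L" "y \<in> carrier L" "z \<in> carrier L"
  then show "(x \<oplus>\<^bsub>L\<^esub> y) \<otimes>\<^bsub>L\<^esub> z = x \<otimes>\<^bsub>L\<^esub> z \<oplus>\<^bsub>L\<^esub> y \<otimes>\<^bsub>L\<^esub> z"
  proof (elim carrier_LE)
    fix a s b t c r assume A: "x = cls a s" "a \<in> carrier R" "s \<in> S" "y = cls b t" "b \<in> carrier R" "t \<in> S"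
      "z = cls c r" "c \<in> carrier R" "r \<in> S"
    have C: "s \<in> carrier R" "t \<in> carrier R" "r \<in> carrier R" using A S_c by auto
    have "x \<otimes>\<^bsub>L\<^esub> z \<oplus>\<^bsub>L\<^esub> y \<otimes>\<^bsub>L\<^esub> z
        = cls (r \<otimes> ((t \<otimes> a \<oplus> s \<otimes> b) \<otimes> c)) (r \<otimes> (s \<otimes> t \<otimes> r))"
      using A C by (simp add: add_cls mult_cls S_mult) (rule cls_cong; algebra)
    also have "\<dots> = (x \<oplus>\<^bsub>L\<^esub> y) \<otimes>\<^bsub>L\<^esub> z"
      using A C by (simp add: add_cls mult_cls S_mult cls_scale)
    finally show ?thesis by simp
  qed
qed


lemma cls_zero_iff: assumes "a \<in> carrier R" "s \<in> S"
  shows "cls a s = \<zero>\<^bsub>L\<^esub> \<longleftrightarrow> (\<exists>u\<in>S. u \<otimes> a = \<zero>)"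
proof -
  have "cls a s = cls \<zero> \<one> \<longleftrightarrow> (\<exists>u\<in>S. u \<otimes> (s \<otimes> \<zero>) = u \<otimes> (\<one> \<otimes> a))"
    by (rule cls_eq_iff) (use assms one_S in auto)
  also have "\<dots> \<longleftrightarrow> (\<exists>u\<in>S. u \<otimes> a = \<zero>)"
    using assms S_c by (auto simp: eq_commute)
  finally show ?thesis by (simp add: zero_L)
qed

lemma S_pow: "s \<in> S \<Longrightarrow> s [^] (n::nat) \<in> S"
  by (induct n) (auto simp: one_S S_mult)

lemma pow_cls: assumes "a \<in> carrier R" "s \<in> S"
  shows "cls a s [^]\<^bsub>L\<^esub> (n::nat) = cls (a [^] n) (s [^] n)"
proof (induct n)
  case 0 then show ?case by (simp add: one_L)
next
  case (Suc n) then show ?case using assms by (simp add: mult_cls S_pow S_c)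
qed

end

lemma (in cring) ideal_crit:
  assumes "I \<subseteq> carrier R" "\<zero> \<in> I" "\<And>a b. a \<in> I \<Longrightarrow> b \<in> I \<Longrightarrow> a \<oplus> b \<in> I"
    "\<And>a. a \<in> I \<Longrightarrow> \<ominus> a \<in> I" "\<And>a x. a \<in> I \<Longrightarrow> x \<in> carrier R \<Longrightarrow> x \<otimes> a \<in> I"
  shows "ideal I R"
proof (rule idealI)
  show "ring R" by (rule ring_axioms)
  show "subgroup I (add_monoid R)"
    using assms by (intro add.subgroupI) auto
  show "\<And>a x. a \<in> I \<Longrightarrow> x \<in> carrier R \<Longrightarrow> x \<otimes> a \<in> I" by (rule assms(5))
  show "\<And>a x. a \<in> I \<Longrightarrow> x \<in> carrier R \<Longrightarrow> a \<otimes> x \<in> I"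
    using assms(1,5) m_comm by (metis subsetD)
qed

lemma (in cring) ann_ideal: "x \<in> carrier R \<Longrightarrow> ideal (ann_elem R x) R"
  unfolding ann_elem_def
  by (rule ideal_crit) (auto simp: l_distr l_minus m_assoc)



locale vsetup = cring R for R (structure) +
  fixes \<nu> :: "'a \<Rightarrow> 'g::linordered_ab_group_add option"
  assumes val: "valuation R \<nu>" and noeth: "noetherian_ring R"
begin

definition "P = vsupp R \<nu>"
definition "K = {x \<in> carrier R. \<exists>s\<in>carrier R - P. s \<otimes> x = \<zero>}"

lemma P_prime: "primeideal P R"
  using val unfolding valuation_def minimal_prime_def P_def by auto

lemma P_min: "primeideal Q R \<Longrightarrow> Q \<subseteq> P \<Longrightarrow> Q = P"
  using val unfolding valuation_def minimal_prime_def P_def by auto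

lemma P_ideal: "ideal P R"
  using P_prime unfolding primeideal_def by auto

lemma P_def': "P = {a \<in> carrier R. \<nu> a = None}" by (simp add: P_def vsupp_def)

lemma P_sub: "P \<subseteq> carrier R" using P_def' by auto

lemma one_notP: "\<one> \<notin> P"
  using P_prime P_ideal by (metis ideal.one_imp_carrier primeideal.I_notcarr)

lemma P_mult: "a \<in> carrier R \<Longrightarrow> b \<in> carrier R \<Longrightarrow> a \<otimes> b \<in> P \<longleftrightarrow> a \<in> P \<or> b \<in> P"
  using P_prime P_ideal by (meson ideal.I_l_closed ideal.I_r_closed primeideal.I_prime)

lemma P_pow: "a \<in> carrier R \<Longrightarrow> a [^] (n::nat) \<in> P \<Longrightarrow> a \<in> P"
proof (induct n)
  case 0 then show ?case using one_notP by simp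
next
  case (Suc n) then show ?case by (auto simp: P_mult)
qed

lemma zero_P: "\<zero> \<in> P"
  using P_ideal by (simp add: additive_subgroup.zero_closed ideal.axioms(1))

lemma K_sub: "K \<subseteq> carrier R" by (auto simp: K_def)

lemma K_ideal: "ideal K R"
  unfolding K_def
proof (rule ideal_crit)
  show "\<zero> \<in> {x \<in> carrier R. \<exists>s\<in>carrier R - P. s \<otimes> x = \<zero>}"
    using one_notP by auto
next
  fix a b assume "a \<in> {x \<in> carrier R. \<exists>s\<in>carrier R - P. s \<otimes> x = \<zero>}"
    "b \<in> {x \<in> carrier R. \<exists>s\<in>carrier R - P. s \<otimes> x = \<zero>}"
  then obtain s t where A: "a \<in> carrier R" "b \<in> carrier R" "s \<in> carrier R - P" "t \<in> carrier R - P"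
    "s \<otimes> a = \<zero>" "t \<otimes> b = \<zero>" by auto
  have st: "s \<in> carrier R" "t \<in> carrier R" using A by auto
  have "(s \<otimes> t) \<otimes> (a \<oplus> b) = t \<otimes> (s \<otimes> a) \<oplus> s \<otimes> (t \<otimes> b)" using A(1,2) st by algebra
  also have "\<dots> = \<zero>" using A st by (simp only: A(5) A(6)) simp
  finally have "(s \<otimes> t) \<otimes> (a \<oplus> b) = \<zero>" .
  moreover have "s \<otimes> t \<in> carrier R - P" using A P_mult by auto
  ultimately show "a \<oplus> b \<in> {x \<in> carrier R. \<exists>s\<in>carrier R - P. s \<otimes> x = \<zero>}" using A by blast
next
  fix a assume "a \<in> {x \<in> carrier R. \<exists>s\<in>carrier R - P. s \<otimes> x = \<zero>}"
  then obtain s where A: "a \<in> carrier R" "s \<in> carrier R - P" "s \<otimes> a = \<zero>" by auto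
  then have "s \<otimes> (\<ominus> a) = \<zero>" by (simp add: r_minus)
  then show "\<ominus> a \<in> {x \<in> carrier R. \<exists>s\<in>carrier R - P. s \<otimes> x = \<zero>}" using A by auto
next
  fix a x assume "a \<in> {x \<in> carrier R. \<exists>s\<in>carrier R - P. s \<otimes> x = \<zero>}" "x \<in> carrier R"
  then obtain s where A: "a \<in> carrier R" "x \<in> carrier R" "s \<in> carrier R - P" "s \<otimes> a = \<zero>" by auto
  then have "s \<otimes> (x \<otimes> a) = \<zero>" by (metis DiffD1 m_lcomm r_null)
  then show "x \<otimes> a \<in> {x \<in> carrier R. \<exists>s\<in>carrier R - P. s \<otimes> x = \<zero>}" using A by auto
qed auto

lemma one_notK: "\<one> \<notin> K"
  using zero_P by (auto simp: K_def)

lemma K_cancel: "a \<in> carrier R - P \<Longrightarrow> x \<in> carrier R \<Longrightarrow> a \<otimes> x \<in> K \<Longrightarrow> x \<in> K"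
proof -
  assume A: "a \<in> carrier R - P" "x \<in> carrier R" "a \<otimes> x \<in> K"
  then obtain s where s: "s \<in> carrier R - P" "s \<otimes> (a \<otimes> x) = \<zero>" by (auto simp: K_def)
  then have "(s \<otimes> a) \<otimes> x = \<zero>" using A by (simp add: m_assoc)
  moreover have "s \<otimes> a \<in> carrier R - P" using A s P_mult by auto
  ultimately show "x \<in> K" using A by (auto simp: K_def)
qed

lemma K_P: "K \<subseteq> P"
proof
  fix x assume "x \<in> K"
  then obtain s where "x \<in> carrier R" "s \<in> carrier R - P" "s \<otimes> x = \<zero>" by (auto simp: K_def)
  then show "x \<in> P" using zero_P P_mult by (metis DiffD1 DiffD2)
qed

lemma exists_b: "\<exists>b\<in>carrier R - P. \<forall>x\<in>K. b \<otimes> x = \<zero>"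
proof -
  interpret noetherian_ring R by (rule noeth)
  obtain A where A: "A \<subseteq> carrier R" "finite A" "K = Idl A"
    using finetely_gen[OF K_ideal] by blast
  have AK: "A \<subseteq> K" using A genideal_self by auto
  have "\<exists>b\<in>carrier R - P. \<forall>a\<in>A. b \<otimes> a = \<zero>" using A(2) AK
  proof (induct A rule: finite_induct)
    case empty then show ?case using one_notP by auto
  next
    case (insert a A)
    then obtain b where b: "b \<in> carrier R - P" "\<forall>a\<in>A. b \<otimes> a = \<zero>" by auto
    from insert obtain s where s: "a \<in> carrier R" "s \<in> carrier R - P" "s \<otimes> a = \<zero>" by (auto simp: K_def)
    have "\<forall>c\<in>insert a A. (s \<otimes> b) \<otimes> c = \<zero>"
      using b s insert(4) K_sub
      by (auto simp: m_assoc) (metis DiffD1 m_lcomm r_null subsetD)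
    moreover have "s \<otimes> b \<in> carrier R - P" using b s P_mult by auto
    ultimately show ?case by blast
  qed
  then obtain b where b: "b \<in> carrier R - P" "\<forall>a\<in>A. b \<otimes> a = \<zero>" by auto
  have "A \<subseteq> ann_elem R b" using b A by (auto simp: ann_elem_def) (metis m_comm DiffD1 subsetD)
  then have "K \<subseteq> ann_elem R b" using A(3) genideal_minimal ann_ideal b by auto
  have "\<forall>x\<in>K. b \<otimes> x = \<zero>"
  proof
    fix x assume "x \<in> K"
    then have "x \<in> ann_elem R b" using \<open>K \<subseteq> ann_elem R b\<close> by auto
    then show "b \<otimes> x = \<zero>" using b by (simp add: ann_elem_def) (metis m_comm)
  qed
  then show ?thesis using b by blast
qed


lemma noeth_max:
  assumes "F \<noteq> {}" "\<And>I. I \<in> F \<Longrightarrow> ideal I R"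
  shows "\<exists>J\<in>F. \<forall>Y\<in>F. J \<subseteq> Y \<longrightarrow> Y = J"
proof -
  interpret noetherian_ring R by (rule noeth)
  show ?thesis
  proof (rule subset_Zorn_nonempty[OF assms(1)])
    fix C assume C: "C \<noteq> {}" "subset.chain F C"
    then have "subset.chain {I. ideal I R} C"
      using assms(2) by (auto simp: pred_on.chain_def)
    then have "\<Union>C \<in> C" using ideal_chain_is_trivial C(1) by blast
    then show "\<Union>C \<in> F" using C(2) by (auto simp: pred_on.chain_def)
  qed
qed

lemma ideal_ext:
  assumes Q: "ideal Q R" and c: "c \<in> carrier R"
  shows "ideal {q \<oplus> r \<otimes> c | q r. q \<in> Q \<and> r \<in> carrier R} R"
proof -
  interpret Q: ideal Q R by (rule Q)
  show ?thesis
  proof (rule ideal_crit)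
    show "{q \<oplus> r \<otimes> c | q r. q \<in> Q \<and> r \<in> carrier R} \<subseteq> carrier R"
      using c Q.Icarr by auto
  next
    have "\<zero> = \<zero> \<oplus> \<zero> \<otimes> c" using c by simp
    then show "\<zero> \<in> {q \<oplus> r \<otimes> c | q r. q \<in> Q \<and> r \<in> carrier R}" using Q.zero_closed by blast
  next
    fix a b assume "a \<in> {q \<oplus> r \<otimes> c | q r. q \<in> Q \<and> r \<in> carrier R}"
      "b \<in> {q \<oplus> r \<otimes> c | q r. q \<in> Q \<and> r \<in> carrier R}"
    then obtain q1 r1 q2 r2 where A: "a = q1 \<oplus> r1 \<otimes> c" "b = q2 \<oplus> r2 \<otimes> c" "q1 \<in> Q" "q2 \<in> Q"
      "r1 \<in> carrier R" "r2 \<in> carrier R" by blast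
    have C: "q1 \<in> carrier R" "q2 \<in> carrier R" using A Q.Icarr by auto
    have "a \<oplus> b = (q1 \<oplus> q2) \<oplus> (r1 \<oplus> r2) \<otimes> c" using A(5,6) C c unfolding A(1,2) by algebra
    moreover have "q1 \<oplus> q2 \<in> Q" using A by simp
    ultimately show "a \<oplus> b \<in> {q \<oplus> r \<otimes> c | q r. q \<in> Q \<and> r \<in> carrier R}" using A by blast
  next
    fix a assume "a \<in> {q \<oplus> r \<otimes> c | q r. q \<in> Q \<and> r \<in> carrier R}"
    then obtain q1 r1 where A: "a = q1 \<oplus> r1 \<otimes> c" "q1 \<in> Q" "r1 \<in> carrier R" by blast
    have C: "q1 \<in> carrier R" using A Q.Icarr by auto
    have "\<ominus> a = (\<ominus> q1) \<oplus> (\<ominus> r1) \<otimes> c" using A(3) C c unfolding A(1) by algebra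
    moreover have "\<ominus> q1 \<in> Q" using A by simp
    ultimately show "\<ominus> a \<in> {q \<oplus> r \<otimes> c | q r. q \<in> Q \<and> r \<in> carrier R}" using A by blast
  next
    fix a x assume "a \<in> {q \<oplus> r \<otimes> c | q r. q \<in> Q \<and> r \<in> carrier R}" and x: "x \<in> carrier R"
    then obtain q1 r1 where A: "a = q1 \<oplus> r1 \<otimes> c" "q1 \<in> Q" "r1 \<in> carrier R" by blast
    have C: "q1 \<in> carrier R" using A Q.Icarr by auto
    have "x \<otimes> a = (x \<otimes> q1) \<oplus> (x \<otimes> r1) \<otimes> c" using A(3) C c x unfolding A(1) by algebra
    moreover have "x \<otimes> q1 \<in> Q" using A x Q.I_l_closed by simp
    ultimately show "x \<otimes> a \<in> {q \<oplus> r \<otimes> c | q r. q \<in> Q \<and> r \<in> carrier R}" using A x by blast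
  qed
qed

lemma nilp: assumes xP: "x \<in> P" shows "\<exists>n. x [^] (n::nat) \<in> K"
proof (rule ccontr)
  assume nK: "\<not> ?thesis"
  have xc: "x \<in> carrier R" using xP P_sub by auto
  define M where "M = {s \<otimes> x [^] (n::nat) | s n. s \<in> carrier R - P}"
  have M_c: "M \<subseteq> carrier R" using xc by (auto simp: M_def)
  have M_mult: "m1 \<otimes> m2 \<in> M" if m1M: "m1 \<in> M" and m2M: "m2 \<in> M" for m1 m2
  proof -
    obtain s1 n1 where A1: "m1 = s1 \<otimes> x [^] (n1::nat)" "s1 \<in> carrier R - P"
      using m1M unfolding M_def by blast
    obtain s2 n2 where A2: "m2 = s2 \<otimes> x [^] (n2::nat)" "s2 \<in> carrier R - P"
      using m2M unfolding M_def by blast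
    have C: "s1 \<in> carrier R" "s2 \<in> carrier R" "x [^] n1 \<in> carrier R" "x [^] n2 \<in> carrier R"
      using A1 A2 xc by auto
    have s12: "s1 \<otimes> s2 \<in> carrier R - P" using A1 A2 C P_mult by auto
    have "m1 \<otimes> m2 = (s1 \<otimes> s2) \<otimes> (x [^] n1 \<otimes> x [^] n2)" unfolding A1(1) A2(1) using C by algebra
    also have "\<dots> = (s1 \<otimes> s2) \<otimes> x [^] (n1 + n2)" using xc by (simp add: nat_pow_mult)
    finally show ?thesis using s12 unfolding M_def by blast
  qed
  have zM: "\<zero> \<notin> M"
  proof
    assume "\<zero> \<in> M"
    then obtain s n where "s \<in> carrier R - P" "\<zero> = s \<otimes> x [^] (n::nat)" by (auto simp: M_def)
    then have "x [^] n \<in> K" using xc by (auto simp: K_def)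
    then show False using nK by blast
  qed
  have sM: "carrier R - P \<subseteq> M"
  proof
    fix s assume "s \<in> carrier R - P"
    moreover have "s = s \<otimes> x [^] (0::nat)" using \<open>s \<in> carrier R - P\<close> by simp
    ultimately show "s \<in> M" unfolding M_def by blast
  qed
  have xM: "x \<in> M"
  proof -
    have "x = \<one> \<otimes> x [^] (1::nat)" using xc by simp
    then show ?thesis using one_notP unfolding M_def by blast
  qed
  define F where "F = {Q. ideal Q R \<and> Q \<inter> M = {}}"
  have "{\<zero>} \<in> F" using zeroideal zM by (auto simp: F_def)
  then have Fne: "F \<noteq> {}" by blast
  have Fi: "\<And>I. I \<in> F \<Longrightarrow> ideal I R" unfolding F_def by blast
  obtain Q where Q: "Q \<in> F" and Qmax: "\<forall>Y\<in>F. Q \<subseteq> Y \<longrightarrow> Y = Q"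
    using noeth_max[OF Fne Fi] by blast
  have Qi: "ideal Q R" and QM: "Q \<inter> M = {}" using Q by (auto simp: F_def)
  interpret Q: ideal Q R by (rule Qi)
  have ext: "\<exists>q\<in>Q. \<exists>r\<in>carrier R. q \<oplus> r \<otimes> c \<in> M" if c: "c \<in> carrier R" "c \<notin> Q" for c
  proof -
    define Qc where "Qc = {q \<oplus> r \<otimes> c | q r. q \<in> Q \<and> r \<in> carrier R}"
    have Qci: "ideal Qc R" unfolding Qc_def by (rule ideal_ext[OF Qi c(1)])
    have "Q \<subseteq> Qc"
    proof
      fix q assume "q \<in> Q"
      moreover have "q = q \<oplus> \<zero> \<otimes> c" using \<open>q \<in> Q\<close> c Q.Icarr by simp
      ultimately show "q \<in> Qc" unfolding Qc_def by blast
    qed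
    moreover have "c \<in> Qc"
    proof -
      have "c = \<zero> \<oplus> \<one> \<otimes> c" using c by simp
      then show ?thesis unfolding Qc_def using Q.zero_closed by blast
    qed
    ultimately have "Qc \<noteq> Q" "Q \<subseteq> Qc" using c(2) by blast+
    then have "Qc \<notin> F" using Qmax by blast
    then have "Qc \<inter> M \<noteq> {}" using Qci unfolding F_def by blast
    then show ?thesis unfolding Qc_def by blast
  qed
  have Qprime: "primeideal Q R"
  proof (rule primeidealI)
    show "ideal Q R" by (rule Qi)
    show "cring R" by (rule is_cring)
    have "\<one> \<in> M" using sM one_notP one_closed by blast
    then have "\<one> \<notin> Q" using QM by blast
    then show "carrier R \<noteq> Q" using one_closed by blast
  next
    fix a b assume ab: "a \<in> carrier R" "b \<in> carrier R" "a \<otimes> b \<in> Q"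
    show "a \<in> Q \<or> b \<in> Q"
    proof (rule ccontr)
      assume "\<not> (a \<in> Q \<or> b \<in> Q)"
      then have na: "a \<notin> Q" and nb: "b \<notin> Q" by auto
      obtain q1 r1 where A1: "q1 \<in> Q" "r1 \<in> carrier R" "q1 \<oplus> r1 \<otimes> a \<in> M"
        using ext[OF ab(1) na] by blast
      obtain q2 r2 where A2: "q2 \<in> Q" "r2 \<in> carrier R" "q2 \<oplus> r2 \<otimes> b \<in> M"
        using ext[OF ab(2) nb] by blast
      note A = A1 A2
      have C: "q1 \<in> carrier R" "q2 \<in> carrier R" using A Q.Icarr by auto
      have "(q1 \<oplus> r1 \<otimes> a) \<otimes> (q2 \<oplus> r2 \<otimes> b)
          = q1 \<otimes> (q2 \<oplus> r2 \<otimes> b) \<oplus> (q2 \<otimes> (r1 \<otimes> a) \<oplus> (r1 \<otimes> r2) \<otimes> (a \<otimes> b))"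
        using A(2,5) C ab(1,2) by algebra
      also have "\<dots> \<in> Q"
      proof -
        have "q2 \<oplus> r2 \<otimes> b \<in> carrier R" using A C ab by simp
        then have h1: "q1 \<otimes> (q2 \<oplus> r2 \<otimes> b) \<in> Q" using Q.I_r_closed A(1) by blast
        have h2: "q2 \<otimes> (r1 \<otimes> a) \<in> Q" using Q.I_r_closed A(4) A(2) ab(1) m_closed by blast
        have h3: "(r1 \<otimes> r2) \<otimes> (a \<otimes> b) \<in> Q" using Q.I_l_closed ab(3) A(2) A(5) m_closed by blast
        show ?thesis using h1 h2 h3 Q.a_closed by blast
      qed
      finally show False using M_mult[OF A(3) A(6)] QM by blast
    qed
  qed
  have "Q \<subseteq> P"
  proof
    fix y assume "y \<in> Q"
    then have "y \<in> carrier R" "y \<notin> M" using QM Q.Icarr by blast+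
    then show "y \<in> P" using sM by blast
  qed
  then have "Q = P" using P_min Qprime by blast
  then show False using xP xM QM by blast
qed

lemma existz: "\<exists>z\<in>carrier R - K. \<forall>y\<in>carrier R. (y \<otimes> z \<in> K \<longleftrightarrow> y \<in> P)"
proof -
  interpret K: ideal K R by (rule K_ideal)
  define Iz where "Iz z = {y \<in> carrier R. y \<otimes> z \<in> K}" for z
  have Iz_ideal: "ideal (Iz z) R" if zc: "z \<in> carrier R" for z
    unfolding Iz_def
  proof (rule ideal_crit)
    show "{y \<in> carrier R. y \<otimes> z \<in> K} \<subseteq> carrier R" by blast
    have "\<zero> \<otimes> z = \<zero>" using zc by simp
    then show "\<zero> \<in> {y \<in> carrier R. y \<otimes> z \<in> K}" using K.zero_closed by simp
  next
    fix a b assume "a \<in> {y \<in> carrier R. y \<otimes> z \<in> K}" "b \<in> {y \<in> carrier R. y \<otimes> z \<in> K}"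
    then have ab: "a \<in> carrier R" "b \<in> carrier R" "a \<otimes> z \<in> K" "b \<otimes> z \<in> K" by auto
    have "(a \<oplus> b) \<otimes> z = a \<otimes> z \<oplus> b \<otimes> z" using ab zc by (simp add: l_distr)
    then have "(a \<oplus> b) \<otimes> z \<in> K" using ab K.a_closed by simp
    then show "a \<oplus> b \<in> {y \<in> carrier R. y \<otimes> z \<in> K}" using ab by simp
  next
    fix a assume "a \<in> {y \<in> carrier R. y \<otimes> z \<in> K}"
    then have ab: "a \<in> carrier R" "a \<otimes> z \<in> K" by auto
    have "(\<ominus> a) \<otimes> z = \<ominus> (a \<otimes> z)" using ab zc by (simp add: l_minus)
    then have "(\<ominus> a) \<otimes> z \<in> K" using ab K.a_inv_closed by simp
    then show "\<ominus> a \<in> {y \<in> carrier R. y \<otimes> z \<in> K}" using ab by simp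
  next
    fix a x assume "a \<in> {y \<in> carrier R. y \<otimes> z \<in> K}" and xc: "x \<in> carrier R"
    then have ab: "a \<in> carrier R" "a \<otimes> z \<in> K" by auto
    have "(x \<otimes> a) \<otimes> z = x \<otimes> (a \<otimes> z)" using ab zc xc by (simp add: m_assoc)
    then have "(x \<otimes> a) \<otimes> z \<in> K" using ab xc K.I_l_closed by simp
    then show "x \<otimes> a \<in> {y \<in> carrier R. y \<otimes> z \<in> K}" using ab xc by simp
  qed
  define F where "F = {Iz z | z. z \<in> carrier R - K}"
  have "\<one> \<in> carrier R - K" using one_notK by simp
  then have "Iz \<one> \<in> F" unfolding F_def by blast
  then have Fne: "F \<noteq> {}" by blast
  have Fi: "\<And>I. I \<in> F \<Longrightarrow> ideal I R" using Iz_ideal unfolding F_def by blast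
  obtain I0 where I0: "I0 \<in> F" and Imax: "\<forall>Y\<in>F. I0 \<subseteq> Y \<longrightarrow> Y = I0"
    using noeth_max[OF Fne Fi] by blast
  then obtain z where z: "z \<in> carrier R - K" "I0 = Iz z" unfolding F_def by blast
  have zc: "z \<in> carrier R" and znK: "z \<notin> K" using z by auto
  have "\<forall>y\<in>carrier R. (y \<otimes> z \<in> K \<longleftrightarrow> y \<in> P)"
  proof (intro ballI iffI)
    fix y assume y: "y \<in> carrier R" "y \<otimes> z \<in> K"
    show "y \<in> P"
    proof (rule ccontr)
      assume "y \<notin> P"
      then have "y \<in> carrier R - P" using y by blast
      then have "z \<in> K" using K_cancel y(2) zc by blast
      then show False using znK by simp
    qed
  next
    fix y assume y: "y \<in> carrier R" "y \<in> P"
    obtain n where n: "y [^] (n::nat) \<in> K" using nilp y(2) by blast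
    have "y [^] n \<otimes> z \<in> K" using n zc K.I_r_closed by simp
    then have ex: "\<exists>j. y [^] (j::nat) \<otimes> z \<in> K" by blast
    define j where "j = (LEAST j. y [^] (j::nat) \<otimes> z \<in> K)"
    have jK: "y [^] j \<otimes> z \<in> K" unfolding j_def by (rule LeastI_ex[OF ex])
    have j0: "j \<noteq> 0"
    proof
      assume "j = 0"
      then have "y [^] j \<otimes> z = z" using zc by simp
      then show False using jK znK by simp
    qed
    then obtain i where i: "j = Suc i" by (cases j) auto
    have "i < j" using i by simp
    then have iK: "y [^] i \<otimes> z \<notin> K" unfolding j_def by (rule not_less_Least)
    define z' where "z' = y [^] i \<otimes> z"
    have z'c: "z' \<in> carrier R - K" using iK y zc by (simp add: z'_def)
    have sub: "Iz z \<subseteq> Iz z'"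
    proof
      fix w assume "w \<in> Iz z"
      then have w: "w \<in> carrier R" "w \<otimes> z \<in> K" by (auto simp: Iz_def)
      have yi: "y [^] i \<in> carrier R" using y by simp
      have "w \<otimes> z' = y [^] i \<otimes> (w \<otimes> z)" unfolding z'_def using w(1) yi zc by (simp add: m_lcomm)
      then have "w \<otimes> z' \<in> K" using w K.I_l_closed y by simp
      then show "w \<in> Iz z'" using w by (simp add: Iz_def)
    qed
    have "Iz z' \<in> F" using z'c unfolding F_def by blast
    then have "I0 \<subseteq> Iz z' \<longrightarrow> Iz z' = I0" using Imax by blast
    then have eq: "Iz z' = Iz z" using sub z(2) by simp
    have "y \<otimes> z' = y [^] j \<otimes> z" unfolding z'_def i using y zc
      by (simp add: m_assoc[symmetric] nat_pow_Suc m_comm[of y "y [^] i"])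
    then have "y \<in> Iz z'" using jK y by (simp add: Iz_def)
    then have "y \<in> Iz z" using eq by simp
    then show "y \<otimes> z \<in> K" by (simp add: Iz_def)
  qed
  then show ?thesis using z by blast
qed

end


lemma vlt0_Some[simp]: "vlt (Some 0) (Some (g::'g::linordered_ab_group_add)) \<longleftrightarrow> 0 < g"
  by (auto simp: vlt_def)
lemma vlt0_None[simp]: "vlt (Some 0) (None::'g::linordered_ab_group_add option)"
  by (auto simp: vlt_def)

lemma prime_pow:
  assumes Q: "primeideal Q L" and y: "y \<in> carrier L" and yn: "y [^]\<^bsub>L\<^esub> (n::nat) \<in> Q"
  shows "y \<in> Q"
  using yn
proof (induct n)
  case 0
  interpret Q: primeideal Q L by (rule Q)
  have "\<one>\<^bsub>L\<^esub> \<in> Q" using 0 by simp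
  then have "Q = carrier L" by (rule Q.one_imp_carrier)
  then show ?case using Q.I_notcarr by simp
next
  case (Suc n)
  interpret Q: primeideal Q L by (rule Q)
  have "y [^]\<^bsub>L\<^esub> n \<otimes>\<^bsub>L\<^esub> y \<in> Q" using Suc by simp
  then have "y [^]\<^bsub>L\<^esub> n \<in> Q \<or> y \<in> Q" using Q.I_prime y by simp
  then show ?case using Suc by blast
qed

locale bsetup = vsetup +
  fixes b
  assumes bP: "b \<in> carrier R - P" and bK: "\<forall>x\<in>K. b \<otimes> x = \<zero>"
begin

lemma S0_sub: "powers R b \<subseteq> carrier R - P"
  using bP P_pow by (auto simp: powers_def)

lemma S0_c: "s \<in> powers R b \<Longrightarrow> s \<in> carrier R" using S0_sub by auto
lemma S0_nP: "s \<in> powers R b \<Longrightarrow> s \<notin> P" using S0_sub by auto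

sublocale A: mloc R "powers R b"
proof
  show "powers R b \<subseteq> carrier R" using S0_sub by auto
  have "\<one> = b [^] (0::nat)" by simp
  then show "\<one> \<in> powers R b" unfolding powers_def by blast
  fix s t assume "s \<in> powers R b" "t \<in> powers R b"
  then obtain m n where "s = b [^] (m::nat)" "t = b [^] (n::nat)" unfolding powers_def by blast
  then have "s \<otimes> t = b [^] (m + n)" using bP by (simp add: nat_pow_mult)
  then show "s \<otimes> t \<in> powers R b" unfolding powers_def by blast
qed

lemma b_in_S0: "b \<in> powers R b"
proof -
  have "b = b [^] (1::nat)" using bP by simp
  then show ?thesis unfolding powers_def by blast
qed

lemma A_zero: assumes "a \<in> carrier R" "s \<in> powers R b"
  shows "A.cls a s = \<zero>\<^bsub>A.L\<^esub> \<longleftrightarrow> a \<in> K"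
proof
  assume "A.cls a s = \<zero>\<^bsub>A.L\<^esub>"
  then obtain u where u: "u \<in> powers R b" "u \<otimes> a = \<zero>" using A.cls_zero_iff assms by blast
  then show "a \<in> K" using assms S0_sub unfolding K_def by blast
next
  assume "a \<in> K"
  then have "b \<otimes> a = \<zero>" using bK by blast
  then show "A.cls a s = \<zero>\<^bsub>A.L\<^esub>" using A.cls_zero_iff assms b_in_S0 by blast
qed

abbreviation "gens \<equiv> {loc_class R (powers R b) (r, \<one>) | r. r \<in> carrier R}
         \<union> {loc_class R (powers R b) (a, b) | a. a \<in> set ([]::'a list)}"
abbreviation "G \<equiv> generate_ring (Rb R b) gens"
abbreviation "R' \<equiv> blowup_chart R b []"

lemma A_L_cring: "cring (Rb R b)" unfolding Rb_def by (rule A.L_cring)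

lemma gens_sub: "gens \<subseteq> carrier (Rb R b)"
  unfolding Rb_def using A.cls_in_L A.one_S by auto

lemma G_sub: "G \<subseteq> carrier (Rb R b)"
  using A_L_cring gens_sub by (simp add: cring.axioms(1) ring.generate_ring_incl)

lemma R'_carrier[simp]: "carrier R' = G" by (simp add: blowup_chart_def)
lemma R'_mult[simp]: "x \<otimes>\<^bsub>R'\<^esub> y = x \<otimes>\<^bsub>Rb R b\<^esub> y" by (simp add: blowup_chart_def)
lemma R'_one[simp]: "\<one>\<^bsub>R'\<^esub> = \<one>\<^bsub>Rb R b\<^esub>" by (simp add: blowup_chart_def)
lemma R'_zero[simp]: "\<zero>\<^bsub>R'\<^esub> = \<zero>\<^bsub>Rb R b\<^esub>" by (simp add: blowup_chart_def)
lemma R'_pow[simp]: "x [^]\<^bsub>R'\<^esub> (n::nat) = x [^]\<^bsub>Rb R b\<^esub> n"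
  by (induct n) (simp_all add: nat_pow_def blowup_chart_def)

lemma R'_cring: "cring R'"
proof -
  interpret C: cring "Rb R b" by (rule A_L_cring)
  have "subring G (Rb R b)" using C.generate_ring_is_subring gens_sub by blast
  then have "subcring G (Rb R b)" by (rule C.subcringI')
  then have "cring ((Rb R b)\<lparr>carrier := G\<rparr>)" using C.subcring_iff G_sub by blast
  then show ?thesis by (simp add: blowup_chart_def)
qed


lemma nu_mult: "a \<in> carrier R \<Longrightarrow> c \<in> carrier R \<Longrightarrow> \<nu> (a \<otimes> c) = vplus (\<nu> a) (\<nu> c)"
  using val unfolding valuation_def by blast
lemma nu_one: "\<nu> \<one> = Some 0"
  using val unfolding valuation_def by blast
lemma nu_Some: "a \<in> carrier R \<Longrightarrow> a \<notin> P \<Longrightarrow> \<exists>g. \<nu> a = Some g"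
  by (auto simp: P_def')
lemma nu_None: "a \<in> carrier R \<Longrightarrow> \<nu> a = None \<Longrightarrow> a \<in> P"
  by (auto simp: P_def')

lemma lv_rep: assumes a: "a \<in> carrier R" "s \<in> powers R b" and p: "(a', s') \<in> A.cls a s"
  shows "vminus (\<nu> a') (\<nu> s') = vminus (\<nu> a) (\<nu> s)"
proof -
  from p a obtain u where u: "a' \<in> carrier R" "s' \<in> powers R b" "u \<in> powers R b"
    "u \<otimes> (s' \<otimes> a) = u \<otimes> (s \<otimes> a')" using A.mem_cls by blast
  have C: "s \<in> carrier R" "s' \<in> carrier R" "u \<in> carrier R" using a u S0_c by auto
  obtain g where g: "\<nu> u = Some g" using nu_Some C u S0_nP by blast
  obtain \<sigma> where \<sigma>: "\<nu> s = Some \<sigma>" using nu_Some C a S0_nP by blast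
  obtain \<sigma>' where \<sigma>': "\<nu> s' = Some \<sigma>'" using nu_Some C u S0_nP by blast
  have "vplus (\<nu> u) (vplus (\<nu> s') (\<nu> a)) = vplus (\<nu> u) (vplus (\<nu> s) (\<nu> a'))"
    using u C a by (metis m_closed nu_mult)
  then have e: "vplus (Some \<sigma>') (\<nu> a) = vplus (Some \<sigma>) (\<nu> a')"
    using g \<sigma> \<sigma>' by (cases "\<nu> a"; cases "\<nu> a'") auto
  show ?thesis
  proof (cases "\<nu> a")
    case None
    then show ?thesis using e \<sigma> \<sigma>' by (cases "\<nu> a'") auto
  next
    case (Some \<alpha>)
    then obtain \<alpha>' where \<alpha>': "\<nu> a' = Some \<alpha>'" using e by (cases "\<nu> a'") auto
    then have "\<sigma>' + \<alpha> = \<sigma> + \<alpha>'" using e Some by simp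
    then have "\<alpha>' - \<sigma>' = \<alpha> - \<sigma>" by (simp add: algebra_simps diff_eq_eq eq_diff_eq)
    then show ?thesis using Some \<alpha>' \<sigma> \<sigma>' by simp
  qed
qed

lemma lv: assumes "a \<in> carrier R" "s \<in> powers R b"
  shows "loc_val \<nu> (A.cls a s) = vminus (\<nu> a) (\<nu> s)"
proof -
  have "(\<lambda>v. \<exists>(a', s')\<in>A.cls a s. v = vminus (\<nu> a') (\<nu> s')) = (\<lambda>v. v = vminus (\<nu> a) (\<nu> s))"
  proof (rule ext, rule iffI)
    fix v assume "\<exists>(a', s')\<in>A.cls a s. v = vminus (\<nu> a') (\<nu> s')"
    then show "v = vminus (\<nu> a) (\<nu> s)" using lv_rep assms by auto
  next
    fix v assume "v = vminus (\<nu> a) (\<nu> s)"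
    then show "\<exists>(a', s')\<in>A.cls a s. v = vminus (\<nu> a') (\<nu> s')" using A.cls_refl assms by blast
  qed
  then show ?thesis unfolding loc_val_def by simp
qed

abbreviation "S' \<equiv> carrier R' - vcenter R' (loc_val \<nu>)"

lemma S'_iff: "x \<in> S' \<longleftrightarrow> x \<in> G \<and> \<not> vlt (Some 0) (loc_val \<nu> x)"
  by (auto simp: vcenter_def)

lemma G_dec: assumes "x \<in> G"
  obtains a s where "x = A.cls a s" "a \<in> carrier R" "s \<in> powers R b"
  using assms G_sub A.carrier_LE unfolding Rb_def by blast

lemma S'_num: assumes "x \<in> S'" "x = A.cls a s" "a \<in> carrier R" "s \<in> powers R b"
  shows "a \<notin> P"
proof
  assume "a \<in> P"
  then have "\<nu> a = None" by (simp add: P_def')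
  then have "loc_val \<nu> x = None" using assms lv by simp
  then show False using assms(1) S'_iff by simp
qed

lemma one_G: "\<one>\<^bsub>Rb R b\<^esub> \<in> G" by (rule generate_ring.one)

lemma one_Rb: "\<one>\<^bsub>Rb R b\<^esub> = A.cls \<one> \<one>" unfolding Rb_def by (rule A.one_L)
lemma mult_Rb: "a \<in> carrier R \<Longrightarrow> s \<in> powers R b \<Longrightarrow> c \<in> carrier R \<Longrightarrow> t \<in> powers R b \<Longrightarrow>
  A.cls a s \<otimes>\<^bsub>Rb R b\<^esub> A.cls c t = A.cls (a \<otimes> c) (s \<otimes> t)"
  unfolding Rb_def by (rule A.mult_cls)
lemma zero_Rb: "\<zero>\<^bsub>Rb R b\<^esub> = \<zero>\<^bsub>A.L\<^esub>" unfolding Rb_def ..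
lemma pow_Rb: "a \<in> carrier R \<Longrightarrow> s \<in> powers R b \<Longrightarrow>
  A.cls a s [^]\<^bsub>Rb R b\<^esub> (n::nat) = A.cls (a [^] n) (s [^] n)"
  unfolding Rb_def by (rule A.pow_cls)

lemma B_mloc: "mloc R' S'"
  unfolding mloc_def mloc_axioms_def
proof (intro conjI allI impI)
  show "cring R'" by (rule R'_cring)
  show "S' \<subseteq> carrier R'" by blast
  have "loc_val \<nu> (A.cls \<one> \<one>) = Some 0"
    using lv[of \<one> \<one>] A.one_S nu_one by simp
  then have "\<not> vlt (Some 0) (loc_val \<nu> \<one>\<^bsub>Rb R b\<^esub>)" using one_Rb by simp
  then have "\<one>\<^bsub>Rb R b\<^esub> \<in> S'" unfolding S'_iff using one_G by blast
  then show "\<one>\<^bsub>R'\<^esub> \<in> S'" by simp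
next
  fix x y assume x: "x \<in> S'" and y: "y \<in> S'"
  then have xG: "x \<in> G" and yG: "y \<in> G" by auto
  obtain a s where as: "x = A.cls a s" "a \<in> carrier R" "s \<in> powers R b" using G_dec xG by blast
  obtain c t where ct: "y = A.cls c t" "c \<in> carrier R" "t \<in> powers R b" using G_dec yG by blast
  have "x \<otimes>\<^bsub>Rb R b\<^esub> y \<in> G" using xG yG by (rule generate_ring.eng_mult)
  moreover have prod: "x \<otimes>\<^bsub>Rb R b\<^esub> y = A.cls (a \<otimes> c) (s \<otimes> t)" using as ct mult_Rb by simp
  moreover
  obtain \<alpha> where \<alpha>: "\<nu> a = Some \<alpha>" using nu_Some as S'_num x by blast
  obtain \<gamma> where \<gamma>: "\<nu> c = Some \<gamma>" using nu_Some ct S'_num y by blast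
  obtain \<sigma> where \<sigma>: "\<nu> s = Some \<sigma>" using nu_Some as S0_c S0_nP by blast
  obtain \<tau> where \<tau>: "\<nu> t = Some \<tau>" using nu_Some ct S0_c S0_nP by blast
  have h1: "\<not> 0 < \<alpha> - \<sigma>" using x as lv \<alpha> \<sigma> S'_iff by simp
  have h2: "\<not> 0 < \<gamma> - \<tau>" using y ct lv \<gamma> \<tau> S'_iff by simp
  have "(\<alpha> + \<gamma>) - (\<sigma> + \<tau>) = (\<alpha> - \<sigma>) + (\<gamma> - \<tau>)" by (simp add: algebra_simps)
  then have h3: "\<not> 0 < (\<alpha> + \<gamma>) - (\<sigma> + \<tau>)" using h1 h2
    by (metis add_nonpos_nonpos not_less)
  have "loc_val \<nu> (A.cls (a \<otimes> c) (s \<otimes> t)) = Some ((\<alpha> + \<gamma>) - (\<sigma> + \<tau>))"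
    using lv[of "a \<otimes> c" "s \<otimes> t"] as ct A.S_mult nu_mult S0_c \<alpha> \<gamma> \<sigma> \<tau> by simp
  ultimately have "x \<otimes>\<^bsub>Rb R b\<^esub> y \<in> G" "\<not> vlt (Some 0) (loc_val \<nu> (x \<otimes>\<^bsub>Rb R b\<^esub> y))"
    using h3 by simp_all
  then have "x \<otimes>\<^bsub>Rb R b\<^esub> y \<in> S'" unfolding S'_iff by blast
  then show "x \<otimes>\<^bsub>R'\<^esub> y \<in> S'" by simp
qed

sublocale B: mloc R' S' by (rule B_mloc)


lemma Z1: assumes a: "a \<in> carrier R" "s \<in> powers R b" "A.cls a s \<in> G" and w: "w \<in> S'"
  shows "B.cls (A.cls a s) w = \<zero>\<^bsub>B.L\<^esub> \<longleftrightarrow> a \<in> K"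
proof -
  have x: "A.cls a s \<in> carrier R'" using a by simp
  have "B.cls (A.cls a s) w = \<zero>\<^bsub>B.L\<^esub> \<longleftrightarrow> (\<exists>u\<in>S'. u \<otimes>\<^bsub>R'\<^esub> A.cls a s = \<zero>\<^bsub>R'\<^esub>)"
    by (rule B.cls_zero_iff[OF x w])
  also have "\<dots> \<longleftrightarrow> a \<in> K"
  proof
    assume "\<exists>u\<in>S'. u \<otimes>\<^bsub>R'\<^esub> A.cls a s = \<zero>\<^bsub>R'\<^esub>"
    then obtain u where u: "u \<in> S'" "u \<otimes>\<^bsub>Rb R b\<^esub> A.cls a s = \<zero>\<^bsub>Rb R b\<^esub>" by auto
    then have "u \<in> G" by auto
    then obtain c t where ct: "u = A.cls c t" "c \<in> carrier R" "t \<in> powers R b" using G_dec by blast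
    have cP: "c \<notin> P" using S'_num u(1) ct by blast
    have "A.cls (c \<otimes> a) (t \<otimes> s) = \<zero>\<^bsub>A.L\<^esub>" using u(2) ct a mult_Rb zero_Rb by simp
    then have "c \<otimes> a \<in> K" using A_zero ct a A.S_mult by simp
    then show "a \<in> K" using K_cancel ct cP a by blast
  next
    assume "a \<in> K"
    then have z: "A.cls a s = \<zero>\<^bsub>Rb R b\<^esub>" using A_zero a zero_Rb by simp
    have "\<one>\<^bsub>R'\<^esub> \<in> S'" by (rule B.one_S)
    moreover have "\<one>\<^bsub>R'\<^esub> \<otimes>\<^bsub>R'\<^esub> A.cls a s = \<zero>\<^bsub>R'\<^esub>"
    proof -
      interpret C: cring "Rb R b" by (rule A_L_cring)
      show ?thesis using z by simp
    qed
    ultimately show "\<exists>u\<in>S'. u \<otimes>\<^bsub>R'\<^esub> A.cls a s = \<zero>\<^bsub>R'\<^esub>" by blast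
  qed
  finally show ?thesis .
qed

lemma Nil1: assumes a: "a \<in> carrier R" "s \<in> powers R b" "A.cls a s \<in> G" and w: "w \<in> S'"
  shows "B.cls (A.cls a s) w \<in> nilradical B.L \<longleftrightarrow> a \<in> P"
proof -
  have x: "A.cls a s \<in> carrier R'" using a by simp
  have inL: "B.cls (A.cls a s) w \<in> carrier B.L" using B.cls_in_L x w by blast
  have pw: "B.cls (A.cls a s) w [^]\<^bsub>B.L\<^esub> n = \<zero>\<^bsub>B.L\<^esub> \<longleftrightarrow> a [^] n \<in> K" for n :: nat
  proof -
    have "B.cls (A.cls a s) w [^]\<^bsub>B.L\<^esub> n = B.cls (A.cls a s [^]\<^bsub>R'\<^esub> n) (w [^]\<^bsub>R'\<^esub> n)"
      by (rule B.pow_cls[OF x w])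
    also have "\<dots> = B.cls (A.cls (a [^] n) (s [^] n)) (w [^]\<^bsub>R'\<^esub> n)"
      using pow_Rb a by simp
    finally have e: "B.cls (A.cls a s) w [^]\<^bsub>B.L\<^esub> n = B.cls (A.cls (a [^] n) (s [^] n)) (w [^]\<^bsub>R'\<^esub> n)" .
    have "A.cls a s [^]\<^bsub>R'\<^esub> n \<in> carrier R'"
      using R'_cring x by (simp add: cring.axioms(1) monoid.nat_pow_closed ring.is_monoid del: R'_pow R'_carrier)
    then have G': "A.cls (a [^] n) (s [^] n) \<in> G" using pow_Rb a by simp
    have w': "w [^]\<^bsub>R'\<^esub> n \<in> S'" by (rule B.S_pow[OF w])
    show ?thesis unfolding e using Z1[OF _ _ G' w'] a A.S_pow by simp
  qed
  have "(\<exists>n::nat. a [^] n \<in> K) \<longleftrightarrow> a \<in> P"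
    using nilp K_P P_pow a by blast
  then show ?thesis using pw inL unfolding nilradical_def by auto
qed

lemma L_dec: assumes "y \<in> carrier B.L"
  obtains a s w where "y = B.cls (A.cls a s) w" "a \<in> carrier R" "s \<in> powers R b" "w \<in> S'" "A.cls a s \<in> G"
proof -
  obtain x w where xw: "y = B.cls x w" "x \<in> carrier R'" "w \<in> S'" using B.carrier_LE assms by blast
  then have xG: "x \<in> G" by simp
  then obtain a s where as: "x = A.cls a s" "a \<in> carrier R" "s \<in> powers R b" using G_dec by blast
  have "A.cls a s \<in> G" using xG as(1) by simp
  then show ?thesis using that xw as by blast
qed

lemma L_mult: assumes "a \<in> carrier R" "s \<in> powers R b" "A.cls a s \<in> G" "w \<in> S'"
  "c \<in> carrier R" "t \<in> powers R b" "A.cls c t \<in> G" "v \<in> S'"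
  shows "B.cls (A.cls a s) w \<otimes>\<^bsub>B.L\<^esub> B.cls (A.cls c t) v = B.cls (A.cls (a \<otimes> c) (s \<otimes> t)) (w \<otimes>\<^bsub>R'\<^esub> v)"
    "A.cls (a \<otimes> c) (s \<otimes> t) \<in> G" "w \<otimes>\<^bsub>R'\<^esub> v \<in> S'"
proof -
  have "B.cls (A.cls a s) w \<otimes>\<^bsub>B.L\<^esub> B.cls (A.cls c t) v = B.cls (A.cls a s \<otimes>\<^bsub>R'\<^esub> A.cls c t) (w \<otimes>\<^bsub>R'\<^esub> v)"
    using assms by (intro B.mult_cls) simp_all
  then show "B.cls (A.cls a s) w \<otimes>\<^bsub>B.L\<^esub> B.cls (A.cls c t) v = B.cls (A.cls (a \<otimes> c) (s \<otimes> t)) (w \<otimes>\<^bsub>R'\<^esub> v)"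
    using assms mult_Rb by simp
  have "A.cls a s \<otimes>\<^bsub>Rb R b\<^esub> A.cls c t \<in> G" using assms by (intro generate_ring.eng_mult)
  then show "A.cls (a \<otimes> c) (s \<otimes> t) \<in> G" using assms mult_Rb by simp
  show "w \<otimes>\<^bsub>R'\<^esub> v \<in> S'" using assms B.S_mult by blast
qed


theorem ass_primes: "associated_primes B.L = {nilradical B.L}"
proof -
  interpret C: cring B.L by (rule B.L_cring)
  obtain z where z: "z \<in> carrier R - K" "\<forall>y\<in>carrier R. (y \<otimes> z \<in> K \<longleftrightarrow> y \<in> P)"
    using existz by blast
  have zc: "z \<in> carrier R" using z by blast
  have zG: "A.cls z \<one> \<in> G" using zc by (intro generate_ring.incl) blast
  have oneS: "\<one>\<^bsub>R'\<^esub> \<in> S'" by (rule B.one_S)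
  have one1: "\<one>\<^bsub>R'\<^esub> = A.cls \<one> \<one>" using one_Rb by simp
  have oneG: "A.cls \<one> \<one> \<in> G" using one_G one_Rb by simp
  define Zel where "Zel = B.cls (A.cls z \<one>) \<one>\<^bsub>R'\<^esub>"
  have Zc: "Zel \<in> carrier B.L" unfolding Zel_def using zG oneS by (intro B.cls_in_L) simp_all
  have annZ: "ann_elem B.L Zel = nilradical B.L"
  proof (rule Set.set_eqI)
    fix y
    show "y \<in> ann_elem B.L Zel \<longleftrightarrow> y \<in> nilradical B.L"
    proof (cases "y \<in> carrier B.L")
      case False
      then show ?thesis by (simp add: ann_elem_def nilradical_def)
    next
      case True
      then obtain a s w where y: "y = B.cls (A.cls a s) w" "a \<in> carrier R" "s \<in> powers R b" "w \<in> S'" "A.cls a s \<in> G"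
        by (rule L_dec)
      have m: "y \<otimes>\<^bsub>B.L\<^esub> Zel = B.cls (A.cls (a \<otimes> z) (s \<otimes> \<one>)) (w \<otimes>\<^bsub>R'\<^esub> \<one>\<^bsub>R'\<^esub>)"
        "A.cls (a \<otimes> z) (s \<otimes> \<one>) \<in> G" "w \<otimes>\<^bsub>R'\<^esub> \<one>\<^bsub>R'\<^esub> \<in> S'"
        using L_mult[OF y(2,3,5,4) zc A.one_S zG oneS] y(1) unfolding Zel_def by simp_all
      have "y \<in> ann_elem B.L Zel \<longleftrightarrow> y \<otimes>\<^bsub>B.L\<^esub> Zel = \<zero>\<^bsub>B.L\<^esub>" using True by (simp add: ann_elem_def)
      also have "\<dots> \<longleftrightarrow> a \<otimes> z \<in> K" unfolding m(1)
        using Z1[OF _ _ m(2) m(3)] y zc A.S_mult A.one_S by simp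
      also have "\<dots> \<longleftrightarrow> a \<in> P" using z y by blast
      also have "\<dots> \<longleftrightarrow> y \<in> nilradical B.L" using Nil1[OF y(2,3,5,4)] y(1) by simp
      finally show ?thesis .
    qed
  qed
  have one_notNil: "\<one>\<^bsub>B.L\<^esub> \<notin> nilradical B.L"
  proof -
    have "\<one>\<^bsub>B.L\<^esub> = B.cls (A.cls \<one> \<one>) \<one>\<^bsub>R'\<^esub>" using B.one_L one1 by simp
    then show ?thesis using Nil1[OF one_closed A.one_S oneG oneS] one_notP by simp
  qed
  have Nil_prime: "primeideal (nilradical B.L) B.L"
  proof (rule primeidealI)
    show "ideal (nilradical B.L) B.L" using C.ann_ideal[OF Zc] annZ by simp
    show "cring B.L" by (rule B.L_cring)
    show "carrier B.L \<noteq> nilradical B.L" using one_notNil C.one_closed by blast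
  next
    fix y1 y2 assume yy: "y1 \<in> carrier B.L" "y2 \<in> carrier B.L" "y1 \<otimes>\<^bsub>B.L\<^esub> y2 \<in> nilradical B.L"
    obtain a s w where y1: "y1 = B.cls (A.cls a s) w" "a \<in> carrier R" "s \<in> powers R b" "w \<in> S'" "A.cls a s \<in> G"
      using yy(1) by (rule L_dec)
    obtain c t v where y2: "y2 = B.cls (A.cls c t) v" "c \<in> carrier R" "t \<in> powers R b" "v \<in> S'" "A.cls c t \<in> G"
      using yy(2) by (rule L_dec)
    note m = L_mult[OF y1(2,3,5,4) y2(2,3,5,4)]
    have "a \<otimes> c \<in> P" using yy(3) unfolding y1(1) y2(1) m(1)
      using Nil1[OF _ _ m(2) m(3)] y1 y2 A.S_mult by simp
    then have "a \<in> P \<or> c \<in> P" using P_mult y1 y2 by simp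
    then show "y1 \<in> nilradical B.L \<or> y2 \<in> nilradical B.L"
      using Nil1[OF y1(2,3,5,4)] Nil1[OF y2(2,3,5,4)] y1(1) y2(1) by simp
  qed
  have "nilradical B.L \<in> associated_primes B.L"
    unfolding associated_primes_def using Nil_prime Zc annZ by blast
  moreover have "Q = nilradical B.L" if Q: "Q \<in> associated_primes B.L" for Q
  proof -
    obtain Xe where QP: "primeideal Q B.L" and Xe: "Xe \<in> carrier B.L" "Q = ann_elem B.L Xe"
      using Q unfolding associated_primes_def by blast
    interpret Q: primeideal Q B.L by (rule QP)
    show ?thesis
    proof (rule subset_antisym)
      show "Q \<subseteq> nilradical B.L"
      proof
        fix y assume yQ: "y \<in> Q"
        then have yc: "y \<in> carrier B.L" and yX: "y \<otimes>\<^bsub>B.L\<^esub> Xe = \<zero>\<^bsub>B.L\<^esub>" using Xe by (auto simp: ann_elem_def)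
        have Xe0: "Xe \<noteq> \<zero>\<^bsub>B.L\<^esub>"
        proof
          assume "Xe = \<zero>\<^bsub>B.L\<^esub>"
          then have "carrier B.L \<subseteq> Q"
          proof -
            assume e: "Xe = \<zero>\<^bsub>B.L\<^esub>"
            show "carrier B.L \<subseteq> Q"
            proof
              fix y assume "y \<in> carrier B.L"
              then have "y \<otimes>\<^bsub>B.L\<^esub> \<zero>\<^bsub>B.L\<^esub> = \<zero>\<^bsub>B.L\<^esub>" by (rule C.r_null)
              then have "y \<otimes>\<^bsub>B.L\<^esub> Xe = \<zero>\<^bsub>B.L\<^esub>" using e by (simp only:)
              then show "y \<in> Q" using Xe(2) \<open>y \<in> carrier B.L\<close> by (simp add: ann_elem_def)
            qed
          qed
          then show False using Q.I_notcarr Q.Icarr by blast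
        qed
        obtain c t v where XD: "Xe = B.cls (A.cls c t) v" "c \<in> carrier R" "t \<in> powers R b" "v \<in> S'" "A.cls c t \<in> G"
          using Xe(1) by (rule L_dec)
        have cK: "c \<notin> K" using Xe0 Z1[OF XD(2,3,5,4)] XD(1) by simp
        obtain a s w where yd: "y = B.cls (A.cls a s) w" "a \<in> carrier R" "s \<in> powers R b" "w \<in> S'" "A.cls a s \<in> G"
          using yc by (rule L_dec)
        note m = L_mult[OF yd(2,3,5,4) XD(2,3,5,4)]
        have "a \<otimes> c \<in> K" using yX unfolding yd(1) XD(1) m(1)
          using Z1[OF _ _ m(2) m(3)] yd XD A.S_mult by simp
        then have "a \<in> P" using K_cancel yd(2) XD(2) cK by blast
        then show "y \<in> nilradical B.L" using Nil1[OF yd(2,3,5,4)] yd(1) by simp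
      qed
    next
      show "nilradical B.L \<subseteq> Q"
      proof
        fix y assume "y \<in> nilradical B.L"
        then obtain n where y: "y \<in> carrier B.L" "y [^]\<^bsub>B.L\<^esub> (n::nat) = \<zero>\<^bsub>B.L\<^esub>"
          unfolding nilradical_def by blast
        then have "y [^]\<^bsub>B.L\<^esub> n \<in> Q" using Q.zero_closed by simp
        then show "y \<in> Q" using prime_pow[OF QP y(1)] by blast
      qed
    qed
  qed
  ultimately show ?thesis by blast
qed

end

theorem mainTheorem7:
  fixes R :: "'a ring" and m :: "'a set" and \<nu> :: "'a \<Rightarrow> 'g::linordered_ab_group_add option"
  assumes "noetherian_ring R"
    and "local_ring R m"
    and "valuation R \<nu>"
    and "centered_on R m \<nu>"
  shows "\<exists>b as. blowup_data R \<nu> b as \<and>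
           associated_primes (local_blowup R \<nu> b as) = {nilradical (local_blowup R \<nu> b as)}"
proof -
  have cr: "cring R" using assms(3) unfolding valuation_def by blast
  have V: "vsetup R \<nu>" unfolding vsetup_def vsetup_axioms_def using cr assms(1,3) by blast
  obtain b where b: "b \<in> carrier R - vsetup.P R \<nu>" "\<forall>x\<in>vsetup.K R \<nu>. b \<otimes>\<^bsub>R\<^esub> x = \<zero>\<^bsub>R\<^esub>"
    using vsetup.exists_b[OF V] by blast
  have BS: "bsetup R \<nu> b" unfolding bsetup_def bsetup_axioms_def using V b by blast
  have "blowup_data R \<nu> b []"
    using b unfolding blowup_data_def vsetup.P_def[OF V] by simp
  moreover have "local_blowup R \<nu> b [] = localization (blowup_chart R b [])
      (carrier (blowup_chart R b []) - vcenter (blowup_chart R b []) (loc_val \<nu>))"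
    unfolding local_blowup_def Let_def by (rule refl)
  ultimately show ?thesis using bsetup.ass_primes[OF BS] by metis
qed

end
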